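(* For a non-negative integer $N$, let $\mathcal{Z}_N:=\sum_{c=0}^{N}\mathbb{Q}\cdot\zeta(-c,s+c)$ and $\mathcal{Z}:=\bigcup_{N\ge0}\mathcal{Z}_N$ (the $\mathbb{Q}$-vector spaces of meromorphic functions of $s$ spanned by these functions). Then $$\mathcal{Z}_N=\bigoplus_{\substack{c \text{ even}\\0\le c\le N}}\mathbb{Q}\cdot\zeta(-c,s+c),\qquad \mathcal{Z}=\bigoplus_{\substack{c\text{ even}\\ c\ge0}}\mathbb{Q}\cdot\zeta(-c,s+c),$$ and $\dim_{\mathbb{Q}}\mathcal{Z}_N=\lfloor N/2\rfloor+1$.
   Context: For an integer $c\ge 0$, $\zeta(-c,s+c)$ denotes the Euler–Zagier double zeta function $\zeta(s_1,s_2)=\sum_{1\le n_1<n_2} n_1^{-s_1}n_2^{-s_2}$ evaluated at $(s_1,s_2)=(-c,s+c)$; i.e. it is the meromorphic continuation to all $s\in\mathbb{C}$ of the series $\sum_{m,n\ge1} m^{c}(m+n)^{-s-c}$, which converges absolutely for $\Re(s)>2$. The direct sum notation means that the functions $\zeta(-c,s+c)$ with $c$ even in the indicated range are linearly independent over $\mathbb{Q}$ and span the space. *)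

theory Defs
  imports "HOL-Analysis.Analysis" "HOL-Library.Function_Algebras"
begin

text \<open>The function s |-> zeta(-c, s+c), represented by the absolutely convergent
  double series on the half-plane Re s > 2 (and 0 elsewhere).  By the identity
  theorem, Q-linear relations between the meromorphic continuations are exactly
  the Q-linear relations between these restrictions.\<close>
definition dzeta :: "nat \<Rightarrow> complex \<Rightarrow> complex" where
  "dzeta c s = (if Re s > 2 then
      infsum (\<lambda>(m::nat, n::nat). of_nat m ^ c * of_nat (m + n) powr (- s - of_nat c))
             ({1..} \<times> {1..})
    else 0)"

definition scaleQ :: "rat \<Rightarrow> (complex \<Rightarrow> complex) \<Rightarrow> (complex \<Rightarrow> complex)" where
  "scaleQ q f = (\<lambda>s. of_rat q * f s)"

definition ZN :: "nat \<Rightarrow> (complex \<Rightarrow> complex) set" where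
  "ZN N = module.span scaleQ (dzeta ` {..N})"

definition Zall :: "(complex \<Rightarrow> complex) set" where
  "Zall = (\<Union>N. ZN N)"

end

theory Submission
  imports Defs "HOL-Computational_Algebra.Polynomial"
begin

lemma poly_nat_roots_zero:
  fixes q :: "rat poly"
  assumes "\<And>n. n \<ge> k \<Longrightarrow> poly q (of_nat n) = 0"
  shows "q = 0"
proof (rule ccontr)
  assume "q \<noteq> 0"
  hence fin: "finite {x. poly q x = 0}" by (rule poly_roots_finite)
  have "of_nat ` {k..} \<subseteq> {x. poly q x = 0}" using assms by auto
  hence "finite ((of_nat :: nat \<Rightarrow> rat) ` {k..})" using fin finite_subset by blast
  hence "finite {k..}" using finite_imageD by (metis inj_of_nat inj_on_subset subset_UNIV)
  thus False using infinite_Ici[of k] by blast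
qed

lemma periodic_poly_const:
  fixes p :: "rat poly"
  assumes "\<And>x. poly p (x+1) = poly p x"
  shows "p = [:poly p 0:]"
proof -
  let ?q = "p - [:poly p 0:]"
  have "poly ?q (of_nat n) = 0" for n
  proof (induction n)
    case (Suc n)
    then show ?case using assms[of "of_nat n"] by (simp add: add.commute)
  qed simp
  hence "?q = 0" by (intro poly_nat_roots_zero[of 0]) auto
  thus ?thesis by simp
qed

definition antidiff :: "nat \<Rightarrow> rat poly \<Rightarrow> bool" where
  "antidiff c p \<longleftrightarrow> degree p \<le> c+1 \<and> (\<forall>x. poly p (x+1) = poly p x + x^c) \<and> poly p 0 = 0"

lemma antidiff_exists: "\<exists>p. antidiff c p"
proof (induction c rule: less_induct)
  case (less c)
  then have "\<forall>i. \<exists>p. i < c \<longrightarrow> antidiff i p" by blast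
  then obtain S where S: "\<And>i. i < c \<Longrightarrow> antidiff i (S i)" by metis
  define Q where "Q = (\<Sum>i<c. smult (of_nat ((c+1) choose i)) (S i))"
  define p where "p = smult (1 / of_nat (c+1)) (monom 1 (c+1) - Q)"
  have "degree Q \<le> c+1" unfolding Q_def
  proof (rule degree_sum_le)
    fix i assume i: "i \<in> {..<c}"
    have "degree (S i) \<le> i + 1" using S[of i] i unfolding antidiff_def by simp
    thus "degree (smult (of_nat ((c+1) choose i)) (S i)) \<le> c+1"
      using i by (intro order.trans[OF degree_smult_le]) simp
  qed simp
  hence "degree (monom 1 (c+1) - Q) \<le> c+1"
    by (intro degree_diff_le) (simp_all add: degree_monom_le)
  hence deg: "degree p \<le> c+1" unfolding p_def
    by (intro order.trans[OF degree_smult_le])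
  have Si: "poly (S i) (x+1) = poly (S i) x + x^i" if "i < c" for i x
    using S[OF that] unfolding antidiff_def by blast
  have S0: "poly (S i) 0 = 0" if "i < c" for i
    using S[OF that] unfolding antidiff_def by blast
  have PQ: "poly Q y = (\<Sum>i<c. of_nat ((c+1) choose i) * poly (S i) y)" for y
    unfolding Q_def by (simp add: poly_sum)
  have Pp: "poly p y = (y^(c+1) - poly Q y) / of_nat (c+1)" for y
    unfolding p_def by (simp add: poly_monom)
  have p0: "poly p 0 = 0" unfolding Pp PQ using S0 by simp
  have step: "poly p (x+1) = poly p x + x^c" for x
  proof -
    have bin: "(x+1)^(c+1) = (\<Sum>i<c. of_nat ((c+1) choose i) * x^i) + of_nat (c+1) * x^c + x^(c+1)"
      by (subst binomial_ring) (simp add: sum.atMost_Suc lessThan_Suc_atMost[symmetric])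
    have "poly Q (x+1) = (\<Sum>i<c. of_nat ((c+1) choose i) * (poly (S i) x + x^i))"
      unfolding PQ by (rule sum.cong) (simp_all add: Si)
    also have "\<dots> = poly Q x + (\<Sum>i<c. of_nat ((c+1) choose i) * x^i)"
      unfolding PQ by (simp add: distrib_left sum.distrib)
    finally have Q1: "poly Q (x+1) = poly Q x + (\<Sum>i<c. of_nat ((c+1) choose i) * x^i)" .
    have nz: "of_nat (c+1) \<noteq> (0::rat)" by simp
    have A: "poly p y * of_nat (c+1) = y^(c+1) - poly Q y" for y unfolding Pp by simp
    have "poly p (x+1) * of_nat (c+1) = (x+1)^(c+1) - poly Q (x+1)" by (rule A)
    also have "\<dots> = of_nat (c+1) * x^c + x^(c+1) - poly Q x" unfolding Q1 bin by simp
    also have "\<dots> = (poly p x + x^c) * of_nat (c+1)"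
      by (simp only: distrib_right A) (simp add: algebra_simps)
    finally show ?thesis using mult_right_cancel[OF nz] by blast
  qed
  show ?case using deg p0 step unfolding antidiff_def by blast
qed

definition Sp :: "nat \<Rightarrow> rat poly" where "Sp c = (SOME p. antidiff c p)"

lemma Sp: "antidiff c (Sp c)"
  unfolding Sp_def using antidiff_exists by (rule someI_ex)

lemma Sp_deg: "degree (Sp c) \<le> c+1" using Sp[of c] unfolding antidiff_def by (elim conjE)
lemma Sp_step: "poly (Sp c) (x+1) = poly (Sp c) x + x^c" using Sp[of c] unfolding antidiff_def by (elim conjE allE)
lemma Sp_0: "poly (Sp c) 0 = 0" using Sp[of c] unfolding antidiff_def by (elim conjE)

lemma antidiff_unique: "antidiff c p \<Longrightarrow> antidiff c q \<Longrightarrow> p = q"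
proof -
  assume p: "antidiff c p" and q: "antidiff c q"
  have "poly (p - q) (x+1) = poly (p - q) x" for x using p q unfolding antidiff_def by simp
  hence "p - q = [:poly (p-q) 0:]" by (rule periodic_poly_const)
  thus ?thesis using p q unfolding antidiff_def by simp
qed

lemma Sp_zero: "Sp 0 = [:0,1:]"
  by (rule antidiff_unique[OF Sp]) (simp add: antidiff_def)

lemma faulhaber: "poly (Sp c) (of_nat N) = (\<Sum>m<N. of_nat m ^ c)"
  by (induction N) (simp_all add: Sp_0 Sp_step[of c "of_nat _", simplified add.commute] add.commute)

lemma Sp_reflect:
  assumes c: "c \<ge> 1"
  shows "pcompose (Sp c) [:0,-1:] = smult ((-1)^(c+1)) (Sp c + monom 1 c)"
proof -
  let ?F = "pcompose (Sp c) [:0,-1:] - smult ((-1)^(c+1)) (Sp c + monom 1 c)"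
  have PF: "poly ?F y = poly (Sp c) (-y) + (-1)^c * (poly (Sp c) y + y^c)" for y
    by (simp add: poly_pcompose poly_monom)
  have "poly ?F (x+1) = poly ?F x" for x
  proof -
    have e: "-(x+1) + 1 = -x" by simp
    have h1: "poly (Sp c) (-(x+1)) = poly (Sp c) (-x) - (-(x+1))^c"
      using Sp_step[of c "-(x+1)"] unfolding e by simp
    have h2: "poly (Sp c) (x+1) = poly (Sp c) x + x^c" by (rule Sp_step)
    have h3: "(-(x+1))^c = (-1)^c * (x+1)^c" by (rule power_minus)
    have "poly ?F (x+1) = poly (Sp c) (-(x+1)) + (-1)^c * (poly (Sp c) (x+1) + (x+1)^c)"
      by (rule PF)
    also have "\<dots> = poly (Sp c) (-x) + (-1)^c * (poly (Sp c) x + x^c)"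
      unfolding h1 h2 h3 by (simp add: algebra_simps)
    also have "\<dots> = poly ?F x" by (rule PF[symmetric])
    finally show ?thesis .
  qed
  hence "?F = [:poly ?F 0:]" by (rule periodic_poly_const)
  moreover have "poly ?F 0 = 0" using c unfolding PF by (simp add: Sp_0)
  ultimately show ?thesis by simp
qed

lemma Sp_parity:
  assumes "c \<ge> 1" "j \<noteq> c" "even (c + j)"
  shows "coeff (Sp c) j = 0"
proof -
  have "coeff (pcompose (Sp c) [:0,-1:]) j = coeff (smult ((-1)^(c+1)) (Sp c + monom 1 c)) j"
    using Sp_reflect[OF assms(1)] by simp
  hence "(-1)^j * coeff (Sp c) j = (-1)^(c+1) * coeff (Sp c) j"
    using assms(2) by (simp add: coeff_pcompose_linear coeff_monom)
  thus ?thesis using assms(3) by (cases "even c") auto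
qed

lemma Sp_deriv:
  assumes c: "c \<ge> 1"
  shows "pderiv (Sp c) = smult (of_nat c) (Sp (c-1)) + [:coeff (Sp c) 1:]"
proof -
  have st: "poly (Sp c) (1 + x) = poly (Sp c) x + x^c" for x using Sp_step[of c x] by (simp add: add.commute)
  have e1: "pcompose (Sp c) [:1,1:] = Sp c + monom 1 c"
    by (rule poly_eq_poly_eq_iff[THEN iffD1], rule ext) (simp add: poly_pcompose poly_monom st)
  have e2: "pcompose (pderiv (Sp c)) [:1,1:] = pderiv (Sp c) + monom (of_nat c) (c-1)"
    using arg_cong[OF e1, of pderiv] by (simp add: pderiv_pcompose pderiv_add pderiv_monom pderiv_pCons)
  let ?D = "pderiv (Sp c) - smult (of_nat c) (Sp (c-1))"
  have "poly ?D (x+1) = poly ?D x" for x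
  proof -
    have "poly (pderiv (Sp c)) (1 + x) = poly (pderiv (Sp c)) x + of_nat c * x^(c-1)"
      using arg_cong[OF e2, of "\<lambda>p. poly p x"] by (simp add: poly_pcompose poly_monom)
    moreover have "poly (Sp (c-1)) (x+1) = poly (Sp (c-1)) x + x^(c-1)" by (rule Sp_step)
    ultimately show ?thesis by (simp add: algebra_simps)
  qed
  hence "?D = [:poly ?D 0:]" by (rule periodic_poly_const)
  moreover have "poly ?D 0 = coeff (Sp c) 1"
    using Sp_0[of "c-1", unfolded poly_0_coeff_0] by (simp add: poly_0_coeff_0 coeff_pderiv)
  ultimately have "pderiv (Sp c) - smult (of_nat c) (Sp (c-1)) = [:coeff (Sp c) 1:]" by simp
  thus ?thesis by (simp add: diff_eq_eq add.commute)
qed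

lemma Sp_coeff_rec:
  assumes "c \<ge> 1" "j \<ge> 1"
  shows "of_nat (Suc j) * coeff (Sp c) (Suc j) = of_nat c * coeff (Sp (c-1)) j"
proof -
  have "coeff (pderiv (Sp c)) j = coeff (smult (of_nat c) (Sp (c-1)) + [:coeff (Sp c) 1:]) j"
    using Sp_deriv[OF assms(1)] by simp
  thus ?thesis using assms(2) by (cases j) (simp_all add: coeff_pderiv)
qed

definition bn :: "nat \<Rightarrow> rat" where "bn c = coeff (Sp c) 1"

lemma Sp_coeff_closed:
  "j \<le> c \<Longrightarrow> coeff (Sp c) (Suc j) = of_nat (c choose j) / of_nat (Suc j) * bn (c - j)"
proof (induction j arbitrary: c)
  case 0
  thus ?case by (simp add: bn_def)
next
  case (Suc j)
  then obtain n where n: "c = Suc n" and jn: "j \<le> n" by (cases c) auto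
  have IH: "coeff (Sp n) (Suc j) = of_nat (n choose j) / of_nat (Suc j) * bn (n - j)"
    using Suc.IH[OF jn] .
  have rec: "of_nat (Suc (Suc j)) * coeff (Sp c) (Suc (Suc j)) = of_nat c * coeff (Sp n) (Suc j)"
    using Sp_coeff_rec[of c "Suc j"] n by simp
  have bin: "(of_nat c * of_nat (n choose j) :: rat) = of_nat (c choose Suc j) * of_nat (Suc j)"
    unfolding n by (simp only: of_nat_mult[symmetric] Suc_times_binomial_eq)
  have cn: "c - Suc j = n - j" using n by simp
  have "of_nat (Suc (Suc j)) * coeff (Sp c) (Suc (Suc j))
      = (of_nat c * of_nat (n choose j)) / of_nat (Suc j) * bn (n - j)"
    using rec IH by simp
  also have "\<dots> = of_nat (c choose Suc j) * bn (c - Suc j)" unfolding bin cn by simp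
  finally show ?case by (simp add: field_simps)
qed

lemma bn_zero: "bn 0 = 1" by (simp add: bn_def Sp_zero)

lemma poly_le_sum:
  fixes p :: "'a::comm_semiring_1 poly"
  assumes "degree p \<le> n"
  shows "poly p x = (\<Sum>i\<le>n. coeff p i * x^i)"
proof -
  have "poly p x = (\<Sum>i\<le>degree p. coeff p i * x^i)" by (rule poly_altdef)
  also have "\<dots> = (\<Sum>i\<le>n. coeff p i * x^i)"
    by (rule sum.mono_neutral_left) (use assms in \<open>auto simp: coeff_eq_0\<close>)
  finally show ?thesis .
qed

lemma Sp_at_2:
  assumes "c \<ge> 1"
  shows "(\<Sum>j\<le>c. of_nat (c choose j) / of_nat (Suc j) * bn (c-j) * 2^(Suc j)) = 1"
proof -
  have "poly (Sp c) (of_nat 2) = (\<Sum>m<2. of_nat m ^ c)" by (rule faulhaber)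
  also have "\<dots> = 1" using assms by (simp add: numeral_2_eq_2)
  finally have "poly (Sp c) 2 = 1" by simp
  hence "1 = (\<Sum>i\<le>Suc c. coeff (Sp c) i * 2^i)" using poly_le_sum[OF Sp_deg[of c], of 2] by simp
  also have "\<dots> = (\<Sum>i\<le>c. coeff (Sp c) (Suc i) * 2^(Suc i))"
    by (subst sum.atMost_Suc_shift) (simp add: Sp_0[unfolded poly_0_coeff_0])
  also have "\<dots> = (\<Sum>j\<le>c. of_nat (c choose j) / of_nat (Suc j) * bn (c-j) * 2^(Suc j))"
    by (rule sum.cong) (simp_all add: Sp_coeff_closed)
  finally show ?thesis by simp
qed

definition Z2 :: "rat \<Rightarrow> bool" where
  "Z2 q \<longleftrightarrow> (\<exists>a b::int. odd b \<and> q = of_int a / of_int b)"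

lemma Z2_int: "Z2 (of_int a)" unfolding Z2_def by (rule exI[of _ a], rule exI[of _ 1]) simp
lemma Z2_nat: "Z2 (of_nat a)" using Z2_int[of "int a"] by simp
lemma Z2_add: "Z2 x \<Longrightarrow> Z2 y \<Longrightarrow> Z2 (x + y)"
proof -
  assume "Z2 x" "Z2 y"
  then obtain a b c d :: int where "odd b" "x = of_int a / of_int b" "odd d" "y = of_int c / of_int d"
    unfolding Z2_def by blast
  moreover from this have "b \<noteq> 0" "d \<noteq> 0" by auto
  ultimately show ?thesis unfolding Z2_def
    by (intro exI[of _ "a*d + c*b"] exI[of _ "b*d"]) (simp add: field_simps)
qed
lemma Z2_mult: "Z2 x \<Longrightarrow> Z2 y \<Longrightarrow> Z2 (x * y)"
proof -
  assume "Z2 x" "Z2 y"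
  then obtain a b c d :: int where "odd b" "x = of_int a / of_int b" "odd d" "y = of_int c / of_int d"
    unfolding Z2_def by blast
  thus ?thesis unfolding Z2_def
    by (intro exI[of _ "a*c"] exI[of _ "b*d"]) simp
qed
lemma Z2_minus: "Z2 x \<Longrightarrow> Z2 (- x)"
  using Z2_mult[OF Z2_int[of "-1"]] by simp
lemma Z2_diff: "Z2 x \<Longrightarrow> Z2 y \<Longrightarrow> Z2 (x - y)"
  using Z2_add[OF _ Z2_minus] by simp
lemma Z2_sum: "(\<And>i. i \<in> A \<Longrightarrow> Z2 (f i)) \<Longrightarrow> Z2 (sum f A)"
proof (induction A rule: infinite_finite_induct)
  case (infinite A) thus ?case using Z2_int[of 0] by simp
next
  case empty thus ?case using Z2_int[of 0] by simp
next
  case (insert x F) thus ?case by (simp add: Z2_add)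
qed
lemma not_Z2_half: "\<not> Z2 (-1/2)"
proof
  assume "Z2 (-1/2)"
  then obtain a b :: int where b: "odd b" and e: "-1/2 = (of_int a / of_int b :: rat)" unfolding Z2_def by blast
  hence "b \<noteq> 0" by auto
  with e have "of_int (-b) = (of_int (2*a) :: rat)" by (simp add: field_simps)
  hence "-b = 2*a" by (simp only: of_int_eq_iff)
  hence "even b" by presburger
  with b show False by simp
qed

lemma two_pow_odd_decomp: "m \<ge> (1::nat) \<Longrightarrow> \<exists>v u. odd u \<and> m = 2^v * u"
proof (induction m rule: less_induct)
  case (less m)
  show ?case
  proof (cases "even m")
    case True
    then obtain k where k: "m = 2*k" by blast
    with less.prems have "k \<ge> 1" "k < m" by auto
    with less.IH obtain e w where ew: "odd w" "k = 2^e*w" by blast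
    show ?thesis using k ew by (intro exI[of _ "Suc e"] exI[of _ w]) simp
  next
    case False thus ?thesis by (intro exI[of _ 0] exI[of _ m]) simp
  qed
qed

lemma Z2_pow_div:
  assumes "m \<ge> 1" "m < 2^(n+1)"
  shows "Z2 (2^n / of_nat m)"
proof -
  obtain v u where u: "odd u" and m: "m = 2^v * u" using two_pow_odd_decomp[OF assms(1)] by blast
  have "u \<ge> 1" using u by (cases u) auto
  hence "2^v \<le> m" using m by simp
  hence "2^v < (2::nat)^(n+1)" using assms(2) by linarith
  hence "v < n+1" using power_less_imp_less_exp[of "2::nat" v "n+1"] by simp
  hence v: "v \<le> n" by simp
  have "(2::rat)^n / of_nat m = of_int (2^(n-v)) / of_int (int u)"
    using v \<open>u \<ge> 1\<close> by (simp add: m field_simps flip: power_add)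
  thus ?thesis unfolding Z2_def using u by (intro exI[of _ "2^(n-v)"] exI[of _ "int u"]) simp
qed

lemma three_le_pow: "j + 3 < (2::nat)^(j+2)"
  by (induction j) auto

lemma bn_Z2_aux: "c \<ge> 1 \<Longrightarrow> Z2 (2 * bn c) \<and> (even c \<longrightarrow> c \<ge> 2 \<longrightarrow> Z2 ((2 * bn c - 1)/2))"
proof (induction c rule: less_induct)
  case (less c)
  show ?case
  proof (cases "c = 1")
    case True
    have "1 = (\<Sum>j\<le>1. of_nat (1 choose j) / of_nat (Suc j) * bn (1-j) * 2^(Suc j))"
      using Sp_at_2[of 1] by simp
    hence "2 * bn 1 = -1" by (simp add: bn_zero)
    thus ?thesis using True Z2_int[of "-1"] by simp
  next
    case False
    then obtain n where n: "c = Suc (Suc n)" using less.prems by (cases c; cases "c - 1") auto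
    define T where "T j = of_nat (c choose j) / of_nat (Suc j) * bn (c-j) * 2^(Suc j)" for j
    define z where "z j = T (j+2) / 2" for j
    have sum: "(\<Sum>j\<le>c. T j) = 1" using Sp_at_2[of c] n unfolding T_def by simp
    have split: "(\<Sum>j\<le>c. T j) = T 0 + T 1 + 2 * (\<Sum>j\<le>n. z j)"
      unfolding n by (simp add: sum.atMost_Suc_shift z_def sum_divide_distrib[symmetric] del: sum.atMost_Suc)
    have T0: "T 0 = 2 * bn c" by (simp add: T_def)
    have T1: "T 1 = of_nat c * (2 * bn (c-1))" by (simp add: T_def)
    have IH1: "Z2 (2 * bn (c-1))" using less.IH[of "c-1"] n by simp
    have Zz: "Z2 (z j)" if "j \<le> n" for j
    proof (cases "j < n")
      case True
      have zj: "z j = of_nat (c choose (j+2)) * (2^(j+1) / of_nat (j+3)) * (2 * bn (c - (j+2)))"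
        by (simp add: z_def T_def field_simps)
      have Z1: "Z2 (2^(j+1) / of_nat (j+3))"
        by (rule Z2_pow_div) (use three_le_pow[of j] in auto)
      have Z3: "Z2 (2 * bn (c - (j+2)))" using less.IH[of "c - (j+2)"] True n by simp
      show ?thesis unfolding zj by (intro Z2_mult Z2_nat Z1 Z3)
    next
      case False
      with that have j: "j = n" by simp
      have "z j = 2^c / of_nat (c+1)" by (simp add: z_def T_def j n bn_zero field_simps)
      moreover have "Z2 (2^c / of_nat (c+1))"
        by (rule Z2_pow_div) (use less_exp[of "c+1"] in auto)
      ultimately show ?thesis by simp
    qed
    have Zs: "Z2 (\<Sum>j\<le>n. z j)" by (rule Z2_sum) (use Zz in auto)
    have eq: "2 * bn c = 1 - of_nat c * (2 * bn (c-1)) - 2 * (\<Sum>j\<le>n. z j)"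
      using sum split T0 T1 by simp
    have A: "Z2 (2 * bn c)" unfolding eq
      by (intro Z2_diff Z2_mult Z2_int[of 1, simplified] Z2_nat IH1 Zs Z2_int[of 2, simplified])
    have B: "Z2 ((2 * bn c - 1)/2)" if "even c"
    proof -
      obtain m where m: "c = 2*m" using \<open>even c\<close> by blast
      have h: "(2 * bn c - 1)/2 = - (of_nat m * (2 * bn (c-1)) + (\<Sum>j\<le>n. z j))"
        unfolding eq by (simp add: m field_simps)
      show ?thesis unfolding h by (intro Z2_minus Z2_add Z2_mult Z2_nat IH1 Zs)
    qed
    show ?thesis using A B by blast
  qed
qed

lemma bn_nonzero: "even c \<Longrightarrow> c \<ge> 2 \<Longrightarrow> bn c \<noteq> 0"
  using bn_Z2_aux[of c] not_Z2_half by auto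


definition rho :: "nat \<Rightarrow> nat \<Rightarrow> rat" where
  "rho c N = (\<Sum>m\<in>{1..<N}. of_nat m ^ c) / of_nat N ^ c"

definition gam :: "nat \<Rightarrow> nat \<Rightarrow> rat" where
  "gam c d = (if odd d \<and> d \<le> c then coeff (Sp c) (c - d) else 0)"

lemma gam_even: "even d \<Longrightarrow> gam c d = 0" by (simp add: gam_def)
lemma gam_big: "d > c \<Longrightarrow> gam c d = 0" by (simp add: gam_def)
lemma gam_top_even: "K \<ge> 1 \<Longrightarrow> gam (2*K) (2*K-1) = bn (2*K)"
  by (simp add: gam_def bn_def)
lemma gam_top_odd: "gam (2*K+1) (2*K+1) = 0"
  using Sp_0[of "2*K+1"] by (simp add: gam_def poly_0_coeff_0)

lemma rho_one: "rho c 1 = 0" by (simp add: rho_def)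
lemma rho_one'[simp]: "rho c (Suc 0) = 0" by (simp add: rho_def)
lemma rho_zero: "N \<ge> 1 \<Longrightarrow> rho 0 N = of_nat N - 1" by (simp add: rho_def of_nat_diff)

lemma rho_form:
  assumes c: "c \<ge> 1" and N: "N \<ge> 1"
  shows "rho c N = coeff (Sp c) (c+1) * of_nat N + coeff (Sp c) c
                   + (\<Sum>d\<in>{1..c}. gam c d / of_nat N ^ d)"
proof -
  let ?a = "coeff (Sp c)"
  let ?x = "(of_nat N :: rat)"
  have xnz: "?x \<noteq> 0" using N by simp
  have "(\<Sum>m<N. (of_nat m :: rat) ^ c) = (\<Sum>m\<in>{0..<N}. of_nat m ^ c)" by (simp add: atLeast0LessThan)
  also have "\<dots> = (\<Sum>m\<in>{1..<N}. of_nat m ^ c)"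
    using N c by (subst sum.atLeast_Suc_lessThan) auto
  finally have s1: "(\<Sum>m\<in>{1..<N}. (of_nat m :: rat) ^ c) = poly (Sp c) ?x"
    by (simp add: faulhaber)
  have s2: "poly (Sp c) ?x = (\<Sum>i<c. ?a i * ?x^i) + ?a c * ?x^c + ?a (c+1) * ?x^(c+1)"
    by (simp add: poly_le_sum[OF Sp_deg] sum.atMost_Suc lessThan_Suc_atMost[symmetric])
  have s3: "(\<Sum>i<c. ?a i * ?x^i) / ?x^c = (\<Sum>d\<in>{1..c}. ?a (c-d) / ?x^d)"
  proof -
    have "(\<Sum>i<c. ?a i * ?x^i) / ?x^c = (\<Sum>i<c. ?a i / ?x^(c-i))"
      unfolding sum_divide_distrib
    proof (rule sum.cong)
      fix i assume "i \<in> {..<c}"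
      hence "?x^c = ?x^i * ?x^(c-i)" by (simp flip: power_add)
      thus "?a i * ?x^i / ?x^c = ?a i / ?x^(c-i)" using xnz by simp
    qed simp
    also have "\<dots> = (\<Sum>d\<in>{1..c}. ?a (c-d) / ?x^d)"
      by (rule sum.reindex_bij_witness[of _ "\<lambda>d. c - d" "\<lambda>i. c - i"]) auto
    finally show ?thesis .
  qed
  have s4: "(\<Sum>d\<in>{1..c}. ?a (c-d) / ?x^d) = (\<Sum>d\<in>{1..c}. gam c d / ?x^d)"
  proof (rule sum.cong)
    fix d assume d: "d \<in> {1..c}"
    show "?a (c-d) / ?x^d = gam c d / ?x^d"
    proof (cases "odd d")
      case True thus ?thesis using d by (simp add: gam_def)
    next
      case False
      hence "?a (c-d) = 0" using d c by (intro Sp_parity) auto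
      thus ?thesis using False by (simp add: gam_def)
    qed
  qed simp
  have "rho c N = ((\<Sum>i<c. ?a i * ?x^i) + ?a c * ?x^c + ?a (c+1) * ?x^(c+1)) / ?x^c"
    unfolding rho_def s1 s2 ..
  also have "\<dots> = (\<Sum>i<c. ?a i * ?x^i) / ?x^c + ?a c + ?a (c+1) * ?x"
    using xnz by (simp add: add_divide_distrib)
  finally show ?thesis unfolding s3 s4 by simp
qed

lemma laurent_zero:
  fixes \<alpha> \<beta> :: rat
  assumes H: "\<And>N. N \<ge> 2 \<Longrightarrow> \<alpha> * of_nat N + \<beta> + (\<Sum>d\<in>{1..D}. \<gamma> d / of_nat N ^ d) = 0"
  shows "\<forall>d\<in>{1..D}. \<gamma> d = 0"
proof -
  define p where "p = monom \<alpha> (D+1) + monom \<beta> D + (\<Sum>d\<in>{1..D}. monom (\<gamma> d) (D - d))"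
  have "poly p (of_nat N) = 0" if N: "N \<ge> 2" for N
  proof -
    let ?x = "(of_nat N :: rat)"
    have xnz: "?x \<noteq> 0" using N by simp
    have t: "\<gamma> d * ?x^(D-d) = ?x^D * (\<gamma> d / ?x^d)" if "d \<in> {1..D}" for d
    proof -
      have "?x^D = ?x^(D-d) * ?x^d" using that by (simp flip: power_add)
      thus ?thesis using xnz by simp
    qed
    have "poly p ?x = \<alpha> * ?x^(D+1) + \<beta> * ?x^D + (\<Sum>d\<in>{1..D}. \<gamma> d * ?x^(D-d))"
      by (simp add: p_def poly_monom poly_sum)
    also have "\<dots> = ?x^D * (\<alpha> * ?x + \<beta> + (\<Sum>d\<in>{1..D}. \<gamma> d / ?x^d))"
      by (simp add: t sum_distrib_left algebra_simps)
    also have "\<dots> = 0" using H[OF N] by simp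
    finally show ?thesis .
  qed
  hence p0: "p = 0" by (intro poly_nat_roots_zero[of 2]) auto
  show ?thesis
  proof
    fix d assume d: "d \<in> {1..D}"
    have "coeff p (D - d) = (\<Sum>e\<in>{1..D}. coeff (monom (\<gamma> e) (D - e)) (D - d))"
      using d by (auto simp: p_def coeff_monom coeff_sum)
    also have "\<dots> = (\<Sum>e\<in>{1..D}. if e = d then \<gamma> e else 0)"
      using d by (intro sum.cong) (auto simp: coeff_monom)
    also have "\<dots> = \<gamma> d" using d by simp
    finally show "\<gamma> d = 0" using p0 by simp
  qed
qed

lemma span_form:
  "(\<forall>d. even d \<longrightarrow> \<gamma> d = 0) \<Longrightarrow>
   (\<forall>N\<ge>1. v N = \<alpha> * of_nat N + \<beta> + (\<Sum>d\<in>{1..2*K}. \<gamma> d / of_nat N ^ d)) \<Longrightarrow> v 1 = 0 \<Longrightarrow>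
   \<exists>q. \<forall>N\<ge>1. v N = (\<Sum>i\<le>K. q i * rho (2*i) N)"
proof (induction K arbitrary: v \<alpha> \<beta> \<gamma>)
  case 0
  hence ab: "\<alpha> + \<beta> = 0" by simp
  show ?case
  proof (intro exI[of _ "\<lambda>_. \<alpha>"] allI impI)
    fix N :: nat assume N: "N \<ge> 1"
    have "v N = \<alpha> * of_nat N + \<beta>" using 0 N by simp
    also have "\<dots> = \<alpha> * rho 0 N" using ab N by (simp add: rho_zero algebra_simps eq_neg_iff_add_eq_0)
    finally show "v N = (\<Sum>i\<le>0. \<alpha> * rho (2*i) N)" by simp
  qed
next
  case (Suc K)
  define c where "c = 2 * Suc K"
  have c1: "c \<ge> 1" by (simp add: c_def)
  define g where "g = gam c (2*K+1)"
  have gnz: "g \<noteq> 0" unfolding g_def c_def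
    using gam_top_even[of "Suc K"] bn_nonzero[of "2 * Suc K"] by simp
  define t where "t = \<gamma> (2*K+1) / g"
  define w where "w N = v N - t * rho c N" for N
  define \<gamma>' where "\<gamma>' d = \<gamma> d - t * gam c d" for d
  define \<alpha>' where "\<alpha>' = \<alpha> - t * coeff (Sp c) (c+1)"
  define \<beta>' where "\<beta>' = \<beta> - t * coeff (Sp c) c"
  have ev: "\<forall>d. even d \<longrightarrow> \<gamma>' d = 0" using Suc.prems(1) by (simp add: \<gamma>'_def gam_even)
  have wf: "\<forall>N\<ge>1. w N = \<alpha>' * of_nat N + \<beta>' + (\<Sum>d\<in>{1..2*K}. \<gamma>' d / of_nat N ^ d)"
  proof (intro allI impI)
    fix N :: nat assume N: "N \<ge> 1"
    have "w N = \<alpha>' * of_nat N + \<beta>' + (\<Sum>d\<in>{1..c}. \<gamma>' d / of_nat N ^ d)"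
      using Suc.prems(2) N rho_form[OF c1 N]
      by (simp add: w_def \<alpha>'_def \<beta>'_def \<gamma>'_def c_def sum_subtractf diff_divide_distrib
                    sum_distrib_left algebra_simps)
    also have "(\<Sum>d\<in>{1..c}. \<gamma>' d / of_nat N ^ d) = (\<Sum>d\<in>{1..2*K}. \<gamma>' d / of_nat N ^ d)"
    proof (rule sum.mono_neutral_right)
      show "\<forall>d\<in>{1..c} - {1..2*K}. \<gamma>' d / of_nat N ^ d = 0"
      proof
        fix d assume "d \<in> {1..c} - {1..2*K}"
        hence "d = 2*K+1 \<or> d = 2*K+2" by (auto simp: c_def)
        thus "\<gamma>' d / of_nat N ^ d = 0"
        proof
          assume "d = 2*K+1"
          thus ?thesis using gnz by (simp add: \<gamma>'_def t_def g_def)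
        next
          assume "d = 2*K+2"
          thus ?thesis using ev by simp
        qed
      qed
    qed (auto simp: c_def)
    finally show "w N = \<alpha>' * of_nat N + \<beta>' + (\<Sum>d\<in>{1..2*K}. \<gamma>' d / of_nat N ^ d)" .
  qed
  have w1: "w 1 = 0" using Suc.prems(3) by (simp add: w_def rho_one)
  obtain q where q: "\<forall>N\<ge>1. w N = (\<Sum>i\<le>K. q i * rho (2*i) N)"
    using Suc.IH[OF ev wf w1] by blast
  show ?case
  proof (intro exI[of _ "q(Suc K := t)"] allI impI)
    fix N :: nat assume N: "N \<ge> 1"
    have "v N = w N + t * rho c N" by (simp add: w_def)
    also have "\<dots> = (\<Sum>i\<le>K. q i * rho (2*i) N) + t * rho c N" using q N by simp
    also have "\<dots> = (\<Sum>i\<le>Suc K. (q(Suc K := t)) i * rho (2*i) N)"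
      by (simp add: c_def)
    finally show "v N = (\<Sum>i\<le>Suc K. (q(Suc K := t)) i * rho (2*i) N)" .
  qed
qed

lemma odd_span:
  assumes "odd c"
  shows "\<exists>q. \<forall>N\<ge>1. rho c N = (\<Sum>i\<le>c div 2. q i * rho (2*i) N)"
proof -
  obtain K where K: "c = 2*K+1" using assms oddE by blast
  have c1: "c \<ge> 1" using K by simp
  have f: "\<forall>N\<ge>1. rho c N = coeff (Sp c) (c+1) * of_nat N + coeff (Sp c) c
                   + (\<Sum>d\<in>{1..2*K}. gam c d / of_nat N ^ d)"
  proof (intro allI impI)
    fix N :: nat assume N: "N \<ge> 1"
    have "(\<Sum>d\<in>{1..c}. gam c d / of_nat N ^ d) = (\<Sum>d\<in>{1..2*K}. gam c d / of_nat N ^ d)"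
      by (rule sum.mono_neutral_right) (use gam_top_odd[of K] in \<open>auto simp: K le_Suc_eq\<close>)
    thus "rho c N = coeff (Sp c) (c+1) * of_nat N + coeff (Sp c) c
                   + (\<Sum>d\<in>{1..2*K}. gam c d / of_nat N ^ d)"
      using rho_form[OF c1 N] by simp
  qed
  have "\<exists>q. \<forall>N\<ge>1. rho c N = (\<Sum>i\<le>K. q i * rho (2*i) N)"
    by (rule span_form[OF _ f rho_one]) (simp add: gam_even)
  moreover have "c div 2 = K" using K by simp
  ultimately show ?thesis by simp
qed

lemma comb_form:
  "\<exists>\<alpha> \<beta>. \<forall>N\<ge>1. (\<Sum>i\<le>K. q i * rho (2*i) N) =
      \<alpha> * of_nat N + \<beta> + (\<Sum>d\<in>{1..2*K}. (\<Sum>i\<in>{1..K}. q i * gam (2*i) d) / of_nat N ^ d)"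
proof -
  define A where "A i = coeff (Sp (2*i)) (2*i+1)" for i
  define B where "B i = coeff (Sp (2*i)) (2*i)" for i
  have R: "rho (2*i) N = A i * of_nat N + B i + (\<Sum>d\<in>{1..2*K}. gam (2*i) d / of_nat N ^ d)"
    if i: "i \<in> {1..K}" and N: "N \<ge> 1" for i N
  proof -
    have "(\<Sum>d\<in>{1..2*i}. gam (2*i) d / of_nat N ^ d) = (\<Sum>d\<in>{1..2*K}. gam (2*i) d / of_nat N ^ d)"
      by (rule sum.mono_neutral_left) (use i in \<open>auto simp: gam_big\<close>)
    thus ?thesis using rho_form[of "2*i" N] i N by (simp add: A_def B_def)
  qed
  have dec: "{..K} = insert 0 {1..K}" by auto
  show ?thesis
  proof (intro exI allI impI)
    fix N :: nat assume N: "N \<ge> 1"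
    have "(\<Sum>i\<le>K. q i * rho (2*i) N) = q 0 * rho 0 N + (\<Sum>i\<in>{1..K}. q i * rho (2*i) N)"
      unfolding dec by (subst sum.insert) auto
    also have "(\<Sum>i\<in>{1..K}. q i * rho (2*i) N) =
        (\<Sum>i\<in>{1..K}. q i * (A i * of_nat N + B i + (\<Sum>d\<in>{1..2*K}. gam (2*i) d / of_nat N ^ d)))"
      using R N by (intro sum.cong) auto
    also have "\<dots> = (\<Sum>i\<in>{1..K}. q i * A i) * of_nat N + (\<Sum>i\<in>{1..K}. q i * B i)
        + (\<Sum>i\<in>{1..K}. \<Sum>d\<in>{1..2*K}. q i * gam (2*i) d / of_nat N ^ d)"
      by (simp add: algebra_simps sum.distrib sum_distrib_left sum_distrib_right)
    also have "(\<Sum>i\<in>{1..K}. \<Sum>d\<in>{1..2*K}. q i * gam (2*i) d / of_nat N ^ d)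
        = (\<Sum>d\<in>{1..2*K}. (\<Sum>i\<in>{1..K}. q i * gam (2*i) d) / of_nat N ^ d)"
      by (subst sum.swap) (simp add: sum_divide_distrib)
    finally show "(\<Sum>i\<le>K. q i * rho (2*i) N) =
      (q 0 + (\<Sum>i\<in>{1..K}. q i * A i)) * of_nat N + (- q 0 + (\<Sum>i\<in>{1..K}. q i * B i))
      + (\<Sum>d\<in>{1..2*K}. (\<Sum>i\<in>{1..K}. q i * gam (2*i) d) / of_nat N ^ d)"
      using N by (simp add: rho_zero algebra_simps)
  qed
qed

lemma indep_even:
  "(\<forall>N\<ge>2. (\<Sum>i\<le>K. q i * rho (2*i) N) = 0) \<Longrightarrow> \<forall>i\<le>K. q i = 0"
proof (induction K)
  case 0
  hence "q 0 * rho 0 2 = 0" by simp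
  hence "q 0 = 0" by (simp add: rho_zero)
  thus ?case by simp
next
  case (Suc K)
  obtain \<alpha> \<beta> where ab: "\<forall>N\<ge>1. (\<Sum>i\<le>Suc K. q i * rho (2*i) N) =
      \<alpha> * of_nat N + \<beta> + (\<Sum>d\<in>{1..2*Suc K}. (\<Sum>i\<in>{1..Suc K}. q i * gam (2*i) d) / of_nat N ^ d)"
    using comb_form by blast
  have "\<forall>d\<in>{1..2*Suc K}. (\<Sum>i\<in>{1..Suc K}. q i * gam (2*i) d) = 0"
    by (rule laurent_zero) (use ab Suc.prems in auto)
  hence "(\<Sum>i\<in>{1..Suc K}. q i * gam (2*i) (2*K+1)) = 0" by simp
  moreover have "(\<Sum>i\<in>{1..Suc K}. q i * gam (2*i) (2*K+1)) = q (Suc K) * bn (2 * Suc K)"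
  proof -
    have e: "{1..Suc K} = insert (Suc K) {1..K}" by auto
    have "(\<Sum>i\<in>{1..K}. q i * gam (2*i) (2*K+1)) = 0"
      by (rule sum.neutral) (auto simp: gam_big)
    moreover have "gam (2 * Suc K) (2*K+1) = bn (2 * Suc K)"
      using gam_top_even[of "Suc K"] by simp
    ultimately show ?thesis unfolding e by (subst sum.insert) auto
  qed
  moreover have "bn (2 * Suc K) \<noteq> 0" by (rule bn_nonzero) auto
  ultimately have qK: "q (Suc K) = 0" by simp
  hence "\<forall>N\<ge>2. (\<Sum>i\<le>K. q i * rho (2*i) N) = 0" using Suc.prems by simp
  hence "\<forall>i\<le>K. q i = 0" by (rule Suc.IH)
  thus ?case using qK le_Suc_eq by auto
qed


lemma of_rat_complex: "(of_rat r :: complex) = of_real (of_rat r)"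
  by (cases r) (simp add: of_rat_rat)

lemma norm_of_rat_complex: "norm (of_rat r :: complex) = \<bar>of_rat r :: real\<bar>"
  by (simp add: of_rat_complex)

lemma has_sum_sum_fin:
  fixes h :: "'i \<Rightarrow> 'a \<Rightarrow> complex"
  assumes "finite F" "\<And>e. e \<in> F \<Longrightarrow> (h e has_sum S e) A"
  shows "((\<lambda>x. \<Sum>e\<in>F. h e x) has_sum (\<Sum>e\<in>F. S e)) A"
  using assms
proof (induction F rule: finite_induct)
  case empty thus ?case by simp
next
  case (insert e F)
  thus ?case by (simp add: has_sum_add)
qed

lemma powr_series_summable:
  fixes \<sigma> :: real
  assumes "\<sigma> > 2"
  shows "(\<lambda>N::nat. real N powr (1 - \<sigma>)) summable_on {2..}"
proof -
  have "summable (\<lambda>N::nat. real N powr (1 - \<sigma>))" using assms by (subst summable_real_powr_iff) simp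
  hence "(\<lambda>N::nat. real N powr (1 - \<sigma>)) summable_on UNIV"
    by (subst summable_on_UNIV_nonneg_real_iff) auto
  thus ?thesis by (rule summable_on_subset) simp
qed

lemma dzeta_has_sum:
  assumes s: "Re s > 2"
  shows "((\<lambda>N. of_rat (rho c N) * of_nat N powr (-s)) has_sum dzeta c s) {2..}"
proof -
  define f where "f = (\<lambda>(m::nat, n::nat). (of_nat m ^ c * of_nat (m + n) powr (- s - of_nat c) :: complex))"
  define Sg where "Sg = Sigma {2::nat..} (\<lambda>N. {1..<N})"
  define h where "h = (\<lambda>(N::nat, m::nat). (m, N - m))"
  define g where "g = (\<lambda>(N::nat, m::nat). (of_nat m ^ c * of_nat N powr (- s - of_nat c) :: complex))"
  have bij: "bij_betw h Sg ({1..} \<times> {1..})"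
    by (rule bij_betw_byWitness[where f'="\<lambda>(m,n). (m+n, m)"]) (auto simp: h_def Sg_def)
  have fg: "f (h x) = g x" if "x \<in> Sg" for x using that by (auto simp: f_def g_def h_def Sg_def)
  define \<sigma> where "\<sigma> = Re s"
  have norm_g: "norm (g (N, m)) = real m ^ c * real N powr (- \<sigma> - real c)" for N m
    by (simp add: g_def norm_mult norm_power norm_powr_real_powr \<sigma>_def)
  have inner_bound: "(\<Sum>m\<in>{1..<N}. norm (g (N, m))) \<le> real N powr (1 - \<sigma>)" if N: "N \<ge> 2" for N
  proof -
    have "(\<Sum>m\<in>{1..<N}. norm (g (N, m))) \<le> (\<Sum>m\<in>{1..<N}. real N ^ c * real N powr (- \<sigma> - real c))"
      unfolding norm_g by (intro sum_mono mult_right_mono power_mono) auto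
    also have "\<dots> = real (N - 1) * (real N ^ c * real N powr (- \<sigma> - real c))" by simp
    also have "real N ^ c * real N powr (- \<sigma> - real c) = real N powr (- \<sigma>)"
      using N by (simp add: powr_diff powr_realpow powr_minus divide_inverse)
    also have "real (N - 1) * real N powr (- \<sigma>) \<le> real N * real N powr (- \<sigma>)"
      by (intro mult_right_mono) auto
    also have "\<dots> = real N powr (1 - \<sigma>)" using N by (simp add: powr_diff powr_minus divide_inverse)
    finally show ?thesis .
  qed
  have gabs: "(\<lambda>x. norm (g x)) summable_on Sg"
    unfolding Sg_def
  proof (rule Infinite_Sum.abs_summable_on_Sigma_iff[THEN iffD2], intro conjI ballI)
    fix N :: nat assume "N \<in> {2..}"
    show "(\<lambda>m. norm (g (N, m))) summable_on {1..<N}" by simp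
  next
    show "(\<lambda>N. norm (\<Sum>\<^sub>\<infinity>m\<in>{1..<N}. norm (g (N, m)))) summable_on {2..}"
    proof (rule summable_on_comparison_test[OF powr_series_summable[of \<sigma>]])
      show "2 < \<sigma>" using s by (simp add: \<sigma>_def)
    next
      fix N :: nat assume N: "N \<in> {2..}"
      have "norm (\<Sum>\<^sub>\<infinity>m\<in>{1..<N}. norm (g (N, m))) = (\<Sum>m\<in>{1..<N}. norm (g (N, m)))"
        by (simp add: sum_nonneg)
      thus "norm (\<Sum>\<^sub>\<infinity>m\<in>{1..<N}. norm (g (N, m))) \<le> real N powr (1 - \<sigma>)"
        using inner_bound[of N] N by simp
    qed simp
  qed
  hence gsum: "g summable_on Sg" by (simp add: summable_on_iff_abs_summable_on_complex)
  have "infsum f ({1..} \<times> {1..}) = infsum (\<lambda>x. f (h x)) Sg"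
    using infsum_reindex_bij_betw[OF bij, of f] by simp
  also have "\<dots> = infsum g Sg" by (rule infsum_cong) (simp add: fg)
  finally have dz: "dzeta c s = infsum g Sg"
    using s by (simp add: dzeta_def f_def)
  have hs: "(g has_sum dzeta c s) Sg" using gsum dz by (simp add: has_sum_iff)
  have inner: "((\<lambda>m. g (N, m)) has_sum (of_rat (rho c N) * of_nat N powr (-s))) {1..<N}"
    if N: "N \<in> {2..}" for N
  proof -
    have Nnz: "(of_nat N :: complex) \<noteq> 0" using N by simp
    have "(\<Sum>m\<in>{1..<N}. g (N, m)) = (\<Sum>m\<in>{1..<N}. of_nat m ^ c) * of_nat N powr (- s - of_nat c)"
      by (simp add: g_def sum_distrib_right)
    also have "of_nat N powr (- s - of_nat c) = of_nat N powr (-s) / of_nat N ^ c"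
      using Nnz by (simp add: powr_diff powr_nat')
    also have "(\<Sum>m\<in>{1..<N}. (of_nat m :: complex) ^ c) * (of_nat N powr (-s) / of_nat N ^ c)
        = of_rat (rho c N) * of_nat N powr (-s)"
      by (simp add: rho_def of_rat_divide of_rat_sum of_rat_power)
    finally show ?thesis by (intro has_sum_finiteI) auto
  qed
  show ?thesis by (rule has_sum_Sigma'[OF hs[unfolded Sg_def] inner])
qed

lemma dzeta_lin_has_sum:
  assumes "finite F" "Re s > 2"
  shows "((\<lambda>N. of_rat (\<Sum>i\<in>F. q i * rho (hh i) N) * of_nat N powr (-s))
           has_sum (\<Sum>i\<in>F. of_rat (q i) * dzeta (hh i) s)) {2..}"
proof -
  have "((\<lambda>N. \<Sum>i\<in>F. of_rat (q i) * (of_rat (rho (hh i) N) * of_nat N powr (-s)))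
           has_sum (\<Sum>i\<in>F. of_rat (q i) * dzeta (hh i) s)) {2..}"
    by (rule has_sum_sum_fin[OF assms(1)]) (intro has_sum_cmult_right dzeta_has_sum assms(2))
  thus ?thesis by (simp add: of_rat_sum of_rat_mult sum_distrib_right mult.assoc)
qed

lemma dirichlet_unique:
  fixes a :: "nat \<Rightarrow> complex" and C :: real
  assumes bound: "\<And>N. norm (a N) \<le> C * of_nat N"
    and H: "\<And>k::nat. k \<ge> 3 \<Longrightarrow> ((\<lambda>N. a N * of_nat N powr (- of_nat k)) has_sum 0) {2..}"
  shows "\<forall>N\<ge>2. a N = 0"
proof -
  have C0: "C \<ge> 0" using bound[of 1] norm_ge_zero[of "a 1"] by linarith
  have H': "((\<lambda>N. a N / of_nat N ^ k) has_sum 0) {2..}" if k: "k \<ge> 3" for k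
  proof -
    have "((\<lambda>N. a N * of_nat N powr (- of_nat k)) has_sum 0) {2..}" using H[OF k] .
    moreover have "a N * of_nat N powr (- of_nat k) = a N / of_nat N ^ k" if "N \<in> {2::nat..}" for N
      using that by (simp add: powr_minus powr_nat' divide_inverse)
    ultimately show ?thesis using has_sum_cong by (metis (no_types, lifting))
  qed
  have inv2: "(\<lambda>n::nat. inverse (real n ^ 2)) summable_on UNIV"
    by (subst summable_on_UNIV_nonneg_real_iff) (auto intro: inverse_power_summable)
  show ?thesis
  proof (intro allI impI)
    fix N0 :: nat assume "N0 \<ge> 2"
    thus "a N0 = 0"
    proof (induction N0 rule: less_induct)
      case (less N0)
      have z: "a n = 0" if "2 \<le> n" "n < N0" for n using less.IH that by blast
      define r :: real where "r = real N0 / real (N0 + 1)"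
      define Z where "Z = (\<Sum>\<^sub>\<infinity>n\<in>{N0<..}. inverse (real n ^ 2))"
      have Zs: "(\<lambda>n::nat. inverse (real n ^ 2)) summable_on {N0<..}"
        using inv2 by (rule summable_on_subset) simp
      have r0: "0 \<le> r" "r < 1" by (auto simp: r_def)
      have key: "norm (a N0) \<le> r ^ (k - 3) * (C * real N0 ^ 3 * Z)" if k: "k \<ge> 3" for k
      proof -
        let ?f = "\<lambda>n. a n / of_nat n ^ k"
        have fs: "?f summable_on {2..}" using H'[OF k] has_sum_imp_summable by blast
        have fbound: "norm (?f n) \<le> (C * real N0 ^ 3 * r ^ (k - 3) / real N0 ^ k) * inverse (real n ^ 2)"
          if n: "n \<in> {N0<..}" for n
        proof -
          have npos: "real n > 0" "real N0 > 0" using n less.prems by auto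
          have "norm (?f n) = norm (a n) / real n ^ k" by (simp add: norm_divide norm_power)
          also have "\<dots> \<le> C * real n / real n ^ k"
            by (intro divide_right_mono bound) auto
          also have "real n ^ k = real n ^ 3 * real n ^ (k - 3)"
            using k by (simp flip: power_add)
          also have "C * real n / (real n ^ 3 * real n ^ (k - 3))
              = C * inverse (real n ^ 2) * inverse (real n ^ (k-3))"
            using npos by (simp add: field_simps power2_eq_square power3_eq_cube)
          also have "inverse (real n ^ (k-3)) \<le> r ^ (k-3) / real N0 ^ (k - 3)"
          proof -
            have "real N0 / real n \<le> r" unfolding r_def using n npos
              by (simp add: frac_le)
            hence "(real N0 / real n) ^ (k-3) \<le> r ^ (k-3)"
              by (intro power_mono) auto
            thus ?thesis using npos by (simp add: field_simps power_divide)
          qed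
          hence "C * inverse (real n ^ 2) * inverse (real n ^ (k-3))
              \<le> C * inverse (real n ^ 2) * (r ^ (k-3) / real N0 ^ (k - 3))"
            using C0 by (intro mult_left_mono) auto
          also have "\<dots> = (C * real N0 ^ 3 * r ^ (k - 3) / real N0 ^ k) * inverse (real n ^ 2)"
          proof -
            have "real N0 ^ k = real N0 ^ 3 * real N0 ^ (k - 3)" using k by (simp flip: power_add)
            thus ?thesis using npos by (simp add: field_simps)
          qed
          finally show ?thesis .
        qed
        have fabs: "(\<lambda>x. norm (?f x)) summable_on {N0<..}"
          by (rule Infinite_Sum.abs_summable_on_comparison_test'[OF summable_on_cmult_right[OF Zs,
                of "C * real N0 ^ 3 * r ^ (k - 3) / real N0 ^ k"]]) (erule fbound)
        have fsub: "?f summable_on {N0<..}" using fabs by (simp add: summable_on_iff_abs_summable_on_complex)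
        have s2: "?f summable_on insert N0 {N0<..}"
          by (rule summable_on_subset[OF fs]) (use less.prems in auto)
        have "0 = infsum ?f {2..}" using H'[OF k] by (simp add: has_sum_iff)
        also have "{2..} = {2..<N0} \<union> insert N0 {N0<..}" using less.prems by auto
        also have "infsum ?f ({2..<N0} \<union> insert N0 {N0<..}) = infsum ?f {2..<N0} + infsum ?f (insert N0 {N0<..})"
          by (rule infsum_Un_disjoint[OF summable_on_subset[OF fs] s2]) auto
        also have "infsum ?f {2..<N0} = 0" using z by (simp add: infsum_0)
        also have "infsum ?f (insert N0 {N0<..}) = ?f N0 + infsum ?f {N0<..}"
          by (rule infsum_insert[OF fsub]) simp
        finally have eq: "?f N0 = - infsum ?f {N0<..}" by (simp add: eq_neg_iff_add_eq_0)
        have nf: "norm (a N0) / real N0 ^ k = norm (infsum ?f {N0<..})"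
        proof -
          have "norm (a N0) / real N0 ^ k = norm (?f N0)" by (simp add: norm_divide norm_power)
          also have "\<dots> = norm (infsum ?f {N0<..})" by (simp only: eq norm_minus_cancel)
          finally show ?thesis .
        qed
        have "norm (infsum ?f {N0<..}) \<le> infsum (\<lambda>n. norm (?f n)) {N0<..}"
          by (rule norm_infsum_bound[OF fabs])
        also have "\<dots> \<le> infsum (\<lambda>n. (C * real N0 ^ 3 * r ^ (k - 3) / real N0 ^ k) * inverse (real n ^ 2)) {N0<..}"
          by (rule infsum_mono[OF fabs summable_on_cmult_right[OF Zs]]) (erule fbound)
        also have "\<dots> = (C * real N0 ^ 3 * r ^ (k - 3) / real N0 ^ k) * Z"
          unfolding Z_def by (rule infsum_cmult_right) (use Zs in auto)
        finally have "norm (a N0) / real N0 ^ k \<le> (C * real N0 ^ 3 * r ^ (k - 3) / real N0 ^ k) * Z"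
          unfolding nf .
        moreover have P: "real N0 ^ k > 0" using less.prems by simp
        ultimately have "norm (a N0) / real N0 ^ k \<le> (C * real N0 ^ 3 * r ^ (k - 3) * Z) / real N0 ^ k"
          by simp
        hence "norm (a N0) \<le> C * real N0 ^ 3 * r ^ (k - 3) * Z" using P less.prems by (simp add: divide_le_cancel)
        thus ?thesis by (simp add: mult_ac)
      qed
      show "a N0 = 0"
      proof (rule ccontr)
        assume "a N0 \<noteq> 0"
        hence pos: "norm (a N0) > 0" by simp
        define M where "M = C * real N0 ^ 3 * Z"
        have M0: "M \<ge> 0" unfolding M_def Z_def using C0
          by (intro mult_nonneg_nonneg infsum_nonneg) auto
        obtain j where j: "r ^ j < norm (a N0) / (M + 1)"
          using real_arch_pow_inv[of "norm (a N0) / (M + 1)" r] pos M0 r0 by auto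
        have "r ^ j * M \<le> r ^ j * (M + 1)" using r0 by (intro mult_left_mono) auto
        also have "\<dots> < norm (a N0)" using j M0 by (simp add: field_simps)
        finally have "r ^ j * M < norm (a N0)" .
        moreover have "norm (a N0) \<le> r ^ j * M" using key[of "j + 3"] by (simp add: M_def)
        ultimately show False by simp
      qed
    qed
  qed
qed


lemma fun_sum_apply: "(sum f A) x = sum (\<lambda>i. f i x) A"
  by (induction A rule: infinite_finite_induct) auto

lemma vsQ: "vector_space scaleQ"
  by unfold_locales (auto simp: scaleQ_def fun_eq_iff algebra_simps of_rat_add of_rat_mult)

interpretation Q: vector_space scaleQ by (rule vsQ)

lemma scaleQ_sum_apply: "(\<Sum>i\<in>F. scaleQ (q i) (f i)) s = (\<Sum>i\<in>F. of_rat (q i) * f i s)"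
  by (simp add: fun_sum_apply scaleQ_def)

lemma dzeta_out: "\<not> Re s > 2 \<Longrightarrow> dzeta c s = 0" by (simp add: dzeta_def)

lemma odd_in_span:
  assumes "odd c" "c \<le> N"
  shows "dzeta c \<in> Q.span (dzeta ` {e. even e \<and> e \<le> N})"
proof -
  obtain q where q: "\<forall>N\<ge>1. rho c N = (\<Sum>i\<le>c div 2. q i * rho (2*i) N)"
    using odd_span[OF assms(1)] by blast
  have eqf: "dzeta c = (\<Sum>i\<le>c div 2. scaleQ (q i) (dzeta (2*i)))"
  proof (rule ext)
    fix s
    show "dzeta c s = (\<Sum>i\<le>c div 2. scaleQ (q i) (dzeta (2*i))) s"
    proof (cases "Re s > 2")
      case True
      have h1: "((\<lambda>N. of_rat (rho c N) * of_nat N powr (-s)) has_sum dzeta c s) {2..}"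
        by (rule dzeta_has_sum[OF True])
      have h2: "((\<lambda>N. of_rat (\<Sum>i\<le>c div 2. q i * rho (2*i) N) * of_nat N powr (-s))
           has_sum (\<Sum>i\<le>c div 2. of_rat (q i) * dzeta (2*i) s)) {2..}"
        using dzeta_lin_has_sum[where F="{..c div 2}" and hh="\<lambda>i. 2*i" and q=q and s=s] True by simp
      have h3: "((\<lambda>N. of_rat (rho c N) * of_nat N powr (-s))
           has_sum (\<Sum>i\<le>c div 2. of_rat (q i) * dzeta (2*i) s)) {2..}"
        using h2 by (rule has_sum_cong[THEN iffD1, rotated]) (use q in auto)
      have "dzeta c s = (\<Sum>i\<le>c div 2. of_rat (q i) * dzeta (2*i) s)"
        using h1 h3 by (rule has_sum_unique)
      thus ?thesis by (simp add: scaleQ_sum_apply)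
    next
      case False
      thus ?thesis by (simp add: scaleQ_sum_apply dzeta_out)
    qed
  qed
  have "2 * i \<le> N" if "i \<le> c div 2" for i using that assms(2) by linarith
  thus ?thesis unfolding eqf by (intro Q.span_sum Q.span_scale Q.span_base) auto
qed

lemma rho_nonneg: "rho e N \<ge> 0" by (simp add: rho_def sum_nonneg)

lemma rho_le: "rho e N \<le> of_nat N"
proof (cases "N = 0")
  case True thus ?thesis by (simp add: rho_def)
next
  case False
  hence Np: "(of_nat N :: rat) > 0" by simp
  have "(\<Sum>m\<in>{1..<N}. (of_nat m :: rat) ^ e) \<le> (\<Sum>m\<in>{1..<N}. of_nat N ^ e)"
    by (intro sum_mono power_mono) auto
  also have "\<dots> \<le> of_nat N * of_nat N ^ e" using Np by (simp add: mult_right_mono)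
  finally show ?thesis using Np by (simp add: rho_def divide_le_eq)
qed

lemma FI:
  assumes H: "(\<Sum>i\<le>K. scaleQ (q i) (dzeta (2*i))) = 0"
  shows "\<forall>i\<le>K. q i = 0"
proof -
  define a where "a N = (of_rat (\<Sum>i\<le>K. q i * rho (2*i) N) :: complex)" for N
  have hs: "((\<lambda>N. a N * of_nat N powr (- of_nat k)) has_sum 0) {2..}" if k: "k \<ge> 3" for k :: nat
  proof -
    have Re: "Re (of_nat k :: complex) > 2" using k by simp
    have "(\<Sum>i\<le>K. of_rat (q i) * dzeta (2*i) (of_nat k)) = 0"
      using fun_cong[OF H, of "of_nat k"] by (simp add: scaleQ_sum_apply)
    thus ?thesis
      using dzeta_lin_has_sum[where F="{..K}" and s="of_nat k" and q=q and hh="\<lambda>i. 2*i"] Re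
      unfolding a_def by simp
  qed
  have bound: "norm (a N) \<le> (\<Sum>i\<le>K. \<bar>of_rat (q i) :: real\<bar>) * of_nat N" for N
  proof -
    have "norm (a N) = \<bar>(\<Sum>i\<le>K. of_rat (q i) * of_rat (rho (2*i) N)) :: real\<bar>"
      unfolding a_def norm_of_rat_complex by (simp add: of_rat_sum of_rat_mult)
    also have "\<dots> \<le> (\<Sum>i\<le>K. \<bar>of_rat (q i) :: real\<bar> * \<bar>of_rat (rho (2*i) N)\<bar>)"
      by (rule order.trans[OF sum_abs]) (simp add: abs_mult)
    also have "\<dots> \<le> (\<Sum>i\<le>K. \<bar>of_rat (q i) :: real\<bar> * of_nat N)"
    proof (intro sum_mono mult_left_mono)
      fix i
      have "0 \<le> (of_rat (rho (2*i) N) :: real)" using rho_nonneg by (simp add: zero_le_of_rat_iff)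
      moreover have "(of_rat (rho (2*i) N) :: real) \<le> of_rat (of_nat N)"
        using rho_le by (simp only: of_rat_less_eq)
      ultimately show "\<bar>of_rat (rho (2*i) N) :: real\<bar> \<le> of_nat N" by simp
    qed simp
    also have "\<dots> = (\<Sum>i\<le>K. \<bar>of_rat (q i) :: real\<bar>) * of_nat N" by (simp add: sum_distrib_right)
    finally show ?thesis .
  qed
  have "\<forall>N\<ge>2. a N = 0" by (rule dirichlet_unique[OF bound hs])
  hence "\<forall>N\<ge>2. (\<Sum>i\<le>K. q i * rho (2*i) N) = 0" by (simp add: a_def)
  thus ?thesis by (rule indep_even)
qed

lemma sum_evens_reindex:
  fixes F :: "nat set"
  assumes "finite F" "F \<subseteq> {e. even e \<and> e \<le> 2*K}"
  shows "(\<Sum>e\<in>F. G e) = (\<Sum>i\<le>K. if 2*i \<in> F then G (2*i) else 0)"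
proof -
  have "(\<Sum>i\<le>K. if 2*i \<in> F then G (2*i) else 0) = (\<Sum>i\<in>{i\<in>{..K}. 2*i \<in> F}. G (2*i))"
    by (rule sum.inter_filter[symmetric]) simp
  also have "\<dots> = (\<Sum>e\<in>(\<lambda>i. 2*i) ` {i\<in>{..K}. 2*i \<in> F}. G e)"
    by (subst sum.reindex) (auto simp: inj_on_def)
  also have "(\<lambda>i. 2*i) ` {i\<in>{..K}. 2*i \<in> F} = F"
  proof
    show "F \<subseteq> (\<lambda>i. 2*i) ` {i\<in>{..K}. 2*i \<in> F}"
    proof
      fix e assume e: "e \<in> F"
      hence "even e" "e \<le> 2*K" using assms(2) by auto
      hence "e = 2 * (e div 2)" "e div 2 \<le> K" by auto
      thus "e \<in> (\<lambda>i. 2*i) ` {i\<in>{..K}. 2*i \<in> F}" using e by (intro image_eqI[of _ _ "e div 2"]) auto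
    qed
  qed auto
  finally show ?thesis by simp
qed

lemma FI_F:
  assumes "finite F" "F \<subseteq> {e. even e}" "(\<Sum>e\<in>F. scaleQ (u e) (dzeta e)) = 0"
  shows "\<forall>e\<in>F. u e = 0"
proof -
  define K where "K = \<Sum>F"
  have FK: "F \<subseteq> {e. even e \<and> e \<le> 2*K}"
  proof
    fix e assume e: "e \<in> F"
    have "e \<le> K" unfolding K_def using member_le_sum[of e F "\<lambda>x. x"] e assms(1) by simp
    thus "e \<in> {e. even e \<and> e \<le> 2*K}" using e assms(2) by auto
  qed
  define q where "q i = (if 2*i \<in> F then u (2*i) else 0)" for i
  have "(\<Sum>i\<le>K. scaleQ (q i) (dzeta (2*i))) = (\<Sum>i\<le>K. if 2*i \<in> F then scaleQ (u (2*i)) (dzeta (2*i)) else 0)"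
    by (rule sum.cong) (simp_all add: q_def)
  also have "\<dots> = (\<Sum>e\<in>F. scaleQ (u e) (dzeta e))"
    by (rule sum_evens_reindex[OF assms(1) FK, symmetric])
  also have "\<dots> = 0" by (rule assms(3))
  finally have "\<forall>i\<le>K. q i = 0" by (rule FI)
  thus ?thesis
  proof (intro ballI)
    fix e assume e: "e \<in> F" and all: "\<forall>i\<le>K. q i = 0"
    hence "even e" "e \<le> 2*K" using FK by auto
    hence "e = 2 * (e div 2)" "e div 2 \<le> K" by auto
    thus "u e = 0" using all[rule_format, of "e div 2"] e unfolding q_def by auto
  qed
qed

lemma card_evens: "card {c::nat. even c \<and> c \<le> N} = N div 2 + 1"
proof -
  have "{c::nat. even c \<and> c \<le> N} = (\<lambda>i. 2*i) ` {..N div 2}"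
  proof
    show "{c. even c \<and> c \<le> N} \<subseteq> (\<lambda>i. 2*i) ` {..N div 2}"
    proof
      fix c assume "c \<in> {c. even c \<and> c \<le> N}"
      hence "even c" "c \<le> N" by auto
      hence "c = 2 * (c div 2)" "c div 2 \<le> N div 2" by (auto intro: div_le_mono)
      thus "c \<in> (\<lambda>i. 2*i) ` {..N div 2}" by (intro image_eqI[of _ _ "c div 2"]) auto
    qed
  qed auto
  moreover have "card ((\<lambda>i::nat. 2*i) ` {..N div 2}) = N div 2 + 1"
    by (subst card_image) (auto simp: inj_on_def)
  ultimately show ?thesis by simp
qed

theorem theorem2p2:
  shows "(\<forall>N. ZN N = module.span scaleQ (dzeta ` {c. even c \<and> c \<le> N}))
     \<and> Zall = module.span scaleQ (dzeta ` {c. even c})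
     \<and> inj_on dzeta {c. even c}
     \<and> \<not> module.dependent scaleQ (dzeta ` {c. even c})
     \<and> (\<forall>N. vector_space.dim scaleQ (ZN N) = N div 2 + 1)"
proof -
  have A: "ZN N = Q.span (dzeta ` {c. even c \<and> c \<le> N})" for N
  proof
    have "dzeta ` {..N} \<subseteq> Q.span (dzeta ` {c. even c \<and> c \<le> N})"
    proof
      fix x assume "x \<in> dzeta ` {..N}"
      then obtain c where c: "c \<le> N" "x = dzeta c" by auto
      show "x \<in> Q.span (dzeta ` {c. even c \<and> c \<le> N})"
      proof (cases "even c")
        case True thus ?thesis using c by (intro Q.span_base) auto
      next
        case False thus ?thesis using c odd_in_span by simp
      qed
    qed
    hence "Q.span (dzeta ` {..N}) \<subseteq> Q.span (Q.span (dzeta ` {c. even c \<and> c \<le> N}))"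
      by (rule Q.span_mono)
    thus "ZN N \<subseteq> Q.span (dzeta ` {c. even c \<and> c \<le> N})" by (simp add: ZN_def Q.span_span)
  next
    show "Q.span (dzeta ` {c. even c \<and> c \<le> N}) \<subseteq> ZN N"
      unfolding ZN_def by (intro Q.span_mono image_mono) auto
  qed
  have inj: "inj_on dzeta {c. even c}"
  proof (rule inj_onI, rule ccontr)
    fix a b assume a: "a \<in> {c. even c}" and b: "b \<in> {c. even c}" and eq: "dzeta a = dzeta b" and ne: "a \<noteq> b"
    define u where "u e = (if e = a then 1 else - 1 :: rat)" for e
    have "(\<Sum>e\<in>{a,b}. scaleQ (u e) (dzeta e)) = scaleQ 1 (dzeta a) + scaleQ (-1) (dzeta b)"
      using ne by (simp add: u_def)
    also have "\<dots> = 0" using eq by (simp add: Q.scale_minus_left)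
    finally have "\<forall>e\<in>{a,b}. u e = 0" using a b by (intro FI_F) auto
    thus False by (simp add: u_def)
  qed
  have D: "\<not> Q.dependent (dzeta ` {c. even c})"
  proof
    assume "Q.dependent (dzeta ` {c. even c})"
    then obtain t u where t: "finite t" "t \<subseteq> dzeta ` {c. even c}"
      and s: "(\<Sum>v\<in>t. scaleQ (u v) v) = 0" and v: "\<exists>v\<in>t. u v \<noteq> 0"
      unfolding Q.dependent_explicit by blast
    obtain F where F: "F \<subseteq> {c. even c}" "finite F" "t = dzeta ` F"
      using finite_subset_image[OF t] by blast
    have injF: "inj_on dzeta F" using inj F(1) inj_on_subset by blast
    have "(\<Sum>e\<in>F. scaleQ (u (dzeta e)) (dzeta e)) = 0"
      using s unfolding F(3) by (simp add: sum.reindex[OF injF])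
    hence "\<forall>e\<in>F. u (dzeta e) = 0" using F by (intro FI_F) auto
    thus False using v F(3) by auto
  qed
  have B: "Zall = Q.span (dzeta ` {c. even c})"
  proof
    show "Zall \<subseteq> Q.span (dzeta ` {c. even c})"
      unfolding Zall_def A by (auto dest: Q.span_mono[of "dzeta ` {c. even c \<and> c \<le> _}" "dzeta ` {c. even c}", THEN subsetD, rotated])
  next
    show "Q.span (dzeta ` {c. even c}) \<subseteq> Zall"
    proof
      fix x assume "x \<in> Q.span (dzeta ` {c. even c})"
      then obtain t r where t: "finite t" "t \<subseteq> dzeta ` {c. even c}" and x: "x = (\<Sum>a\<in>t. scaleQ (r a) a)"
        unfolding Q.span_explicit by blast
      obtain F where F: "F \<subseteq> {c. even c}" "finite F" "t = dzeta ` F"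
        using finite_subset_image[OF t] by blast
      define N where "N = \<Sum>F"
      have "F \<subseteq> {c. even c \<and> c \<le> N}"
        using F member_le_sum[of _ F "\<lambda>x. x"] unfolding N_def by auto
      hence "t \<subseteq> dzeta ` {c. even c \<and> c \<le> N}" using F(3) by auto
      hence "x \<in> Q.span (dzeta ` {c. even c \<and> c \<le> N})"
        unfolding x by (intro Q.span_sum Q.span_scale Q.span_base) auto
      thus "x \<in> Zall" unfolding Zall_def A by blast
    qed
  qed
  have E: "Q.dim (ZN N) = N div 2 + 1" for N
  proof -
    have ind: "Q.independent (dzeta ` {c. even c \<and> c \<le> N})"
      by (rule Q.independent_mono[OF D]) auto
    have "Q.dim (ZN N) = card (dzeta ` {c. even c \<and> c \<le> N})"
      unfolding A by (rule Q.dim_span_eq_card_independent[OF ind])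
    also have "\<dots> = card {c. even c \<and> c \<le> N}"
      by (rule card_image) (rule inj_on_subset[OF inj], auto)
    also have "\<dots> = N div 2 + 1" by (rule card_evens)
    finally show ?thesis .
  qed
  show ?thesis using A B inj D E by blast
qed


end
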